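(* Let $M$ be a magma satisfying $xy = xz$ and $(xy)z = xy$ for all $x,y,z\in M$. Then $M$ satisfies $xy = x$ for all $x,y\in M$ if and only if $M$ avoids the $2$-element null semigroup $2_N$ on $\{0,1\}$ with Cayley table \[ \begin{array}{c|cc} 2_{N} & 0 & 1 \\ \hline 0 & 0 & 0 \\ 1 & 0 & 0 \end{array}. \]
   Context: A magma is a nonempty set with a binary operation, written by juxtaposition. A magma $M$ avoids a magma $F$ if no submagma of $M$ is isomorphic to $F$. *)

theory Defs
  imports Main
begin

definition magma :: "'a set \<Rightarrow> ('a \<Rightarrow> 'a \<Rightarrow> 'a) \<Rightarrow> bool" where
  "magma M f \<longleftrightarrow> M \<noteq> {} \<and> (\<forall>x\<in>M. \<forall>y\<in>M. f x y \<in> M)"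

definition submagma :: "'a set \<Rightarrow> 'a set \<Rightarrow> ('a \<Rightarrow> 'a \<Rightarrow> 'a) \<Rightarrow> bool" where
  "submagma S M f \<longleftrightarrow> S \<noteq> {} \<and> S \<subseteq> M \<and> (\<forall>x\<in>S. \<forall>y\<in>S. f x y \<in> S)"

definition magma_iso :: "('b \<Rightarrow> 'a) \<Rightarrow> 'b set \<Rightarrow> ('b \<Rightarrow> 'b \<Rightarrow> 'b) \<Rightarrow> 'a set \<Rightarrow> ('a \<Rightarrow> 'a \<Rightarrow> 'a) \<Rightarrow> bool" where
  "magma_iso h F g S f \<longleftrightarrow> bij_betw h F S \<and> (\<forall>x\<in>F. \<forall>y\<in>F. h (g x y) = f (h x) (h y))"

definition avoids :: "'a set \<Rightarrow> ('a \<Rightarrow> 'a \<Rightarrow> 'a) \<Rightarrow> 'b set \<Rightarrow> ('b \<Rightarrow> 'b \<Rightarrow> 'b) \<Rightarrow> bool" where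
  "avoids M f F g \<longleftrightarrow> \<not> (\<exists>S h. submagma S M f \<and> magma_iso h F g S f)"

definition null2_carrier :: "nat set" where "null2_carrier = {0, 1}"
definition null2_op :: "nat \<Rightarrow> nat \<Rightarrow> nat" where "null2_op x y = 0"

end

theory Submission
  imports Defs
begin

theorem mainTheorem7:
  fixes M :: "'a set" and f :: "'a \<Rightarrow> 'a \<Rightarrow> 'a"
  assumes "magma M f"
    and "\<forall>x\<in>M. \<forall>y\<in>M. \<forall>z\<in>M. f x y = f x z"
    and "\<forall>x\<in>M. \<forall>y\<in>M. \<forall>z\<in>M. f (f x y) z = f x y"
  shows "(\<forall>x\<in>M. \<forall>y\<in>M. f x y = x) \<longleftrightarrow> avoids M f null2_carrier null2_op"
proof
  assume L: "\<forall>x\<in>M. \<forall>y\<in>M. f x y = x"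
  show "avoids M f null2_carrier null2_op"
    unfolding avoids_def
  proof
    assume "\<exists>S h. submagma S M f \<and> magma_iso h null2_carrier null2_op S f"
    then obtain S h where S: "submagma S M f" and h: "magma_iso h null2_carrier null2_op S f" by blast
    have b: "bij_betw h {0,1} S" and hom: "\<forall>x\<in>{0,1}. \<forall>y\<in>{0,1::nat}. h 0 = f (h x) (h y)"
      using h unfolding magma_iso_def null2_carrier_def null2_op_def by auto
    have "h 1 \<in> M" using b S unfolding submagma_def bij_betw_def by auto
    then have "f (h 1) (h 1) = h 1" using L by blast
    moreover have "h 0 = f (h 1) (h 1)" using hom by auto
    ultimately have "h 0 = h 1" by simp
    moreover have "inj_on h {0,1::nat}" using b by (simp add: bij_betw_def)
    ultimately show False by (auto dest: inj_onD)
  qed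
next
  assume A: "avoids M f null2_carrier null2_op"
  show "\<forall>x\<in>M. \<forall>y\<in>M. f x y = x"
  proof (rule ccontr)
    assume "\<not> ?thesis"
    then obtain x y where xy: "x \<in> M" "y \<in> M" "f x y \<noteq> x" by blast
    define a where "a = f x y"
    have aM: "a \<in> M" using assms(1) xy unfolding magma_def a_def by blast
    have xz: "\<And>z. z \<in> M \<Longrightarrow> f x z = a" using assms(2) xy unfolding a_def by metis
    have az: "\<And>z. z \<in> M \<Longrightarrow> f a z = a" using assms(3) xy unfolding a_def by blast
    define h where "h = (\<lambda>n::nat. if n = 0 then a else x)"
    have "submagma {a, x} M f" unfolding submagma_def
      using aM xy xz az by auto
    moreover have "magma_iso h null2_carrier null2_op {a, x} f"
    proof -
      have "inj_on h {0,1}" unfolding inj_on_def h_def using xy(3) a_def by simp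
      moreover have "h ` {0,1} = {a, x}" unfolding h_def by auto
      moreover have "\<forall>m\<in>{0,1::nat}. \<forall>n\<in>{0,1::nat}. h (null2_op m n) = f (h m) (h n)"
        unfolding null2_op_def h_def using aM xy(1) xz az by simp
      ultimately show ?thesis unfolding magma_iso_def null2_carrier_def bij_betw_def by blast
    qed
    ultimately show False using A unfolding avoids_def by blast
  qed
qed

end
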